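(* Let $\mathcal{F}$ be a $k$-uniform linear family and let $\nu=\nu(\mathcal{F})$. If $x$ is a vertex of $\mathcal{F}$ with $|\mathcal{F}_x|>k\nu$, then $x\in S_{\mathcal{F}}$.
   Context: A family is a finite collection of distinct subsets of a vertex set; it is $k$-uniform if every member has exactly $k$ elements and linear if any two distinct members share at most one vertex. A matching is a collection of pairwise disjoint members; $\nu(\mathcal{F})$ is the maximum size of a matching, and a maximum matching is one of that size. $\mathcal{F}_x=\{A\in\mathcal{F}:x\in A\}$. $S_{\mathcal{F}}$ denotes the set of vertices of $X_{\mathcal{F}}=\bigcup_{A\in\mathcal{F}}A$ that are covered by (i.e., belong to a member of) every maximum matching of $\mathcal{F}$. *)

theory Defs
  imports Main
begin

definition uniform :: "nat \<Rightarrow> 'a set set \<Rightarrow> bool" where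
  "uniform k F \<longleftrightarrow> (\<forall>A\<in>F. finite A \<and> card A = k)"

definition linear_family :: "'a set set \<Rightarrow> bool" where
  "linear_family F \<longleftrightarrow> (\<forall>A\<in>F. \<forall>B\<in>F. A \<noteq> B \<longrightarrow> card (A \<inter> B) \<le> 1)"

definition matching_in :: "'a set set \<Rightarrow> 'a set set \<Rightarrow> bool" where
  "matching_in F M \<longleftrightarrow> M \<subseteq> F \<and> (\<forall>A\<in>M. \<forall>B\<in>M. A \<noteq> B \<longrightarrow> A \<inter> B = {})"

definition matching_number :: "'a set set \<Rightarrow> nat" where
  "matching_number F = Max (card ` {M. matching_in F M})"

definition maximum_matching :: "'a set set \<Rightarrow> 'a set set \<Rightarrow> bool" where
  "maximum_matching F M \<longleftrightarrow> matching_in F M \<and> card M = matching_number F"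

definition star :: "'a set set \<Rightarrow> 'a \<Rightarrow> 'a set set" where
  "star F x = {A\<in>F. x \<in> A}"

definition covered_set :: "'a set set \<Rightarrow> 'a set" where
  "covered_set F = {v \<in> \<Union>F. \<forall>M. maximum_matching F M \<longrightarrow> v \<in> \<Union>M}"

end

theory Submission
  imports Defs
begin

theorem proposition1:
  fixes F :: "'a set set" and k :: nat and x :: 'a
  assumes "finite F"
    and "uniform k F"
    and "linear_family F"
    and "x \<in> \<Union>F"
    and "card (star F x) > k * matching_number F"
  shows "x \<in> covered_set F"
proof (rule ccontr)
  assume nc: "x \<notin> covered_set F"
  have finM: "finite {M. matching_in F M}"
    by (rule finite_subset[of _ "Pow F"]) (auto simp: matching_in_def assms(1))
  have le: "card M' \<le> matching_number F" if "matching_in F M'" for M'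
    unfolding matching_number_def using finM that by (intro Max_ge) auto
  from nc assms(4) obtain M where mm: "maximum_matching F M" and xM: "x \<notin> \<Union>M"
    unfolding covered_set_def by auto
  have MF: "M \<subseteq> F" and disj: "\<forall>A\<in>M. \<forall>B\<in>M. A \<noteq> B \<longrightarrow> A \<inter> B = {}"
    and cM: "card M = matching_number F"
    using mm unfolding maximum_matching_def matching_in_def by auto
  have finMM: "finite M" using MF assms(1) finite_subset by blast
  have hit: "A \<inter> \<Union>M \<noteq> {}" if "A \<in> star F x" for A
  proof
    assume e: "A \<inter> \<Union>M = {}"
    have AF: "A \<in> F" and xA: "x \<in> A" using that unfolding star_def by auto
    have AnM: "A \<notin> M" using xA xM by auto
    have "matching_in F (insert A M)"
      unfolding matching_in_def using MF AF disj e by blast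
    hence "card (insert A M) \<le> matching_number F" by (rule le)
    moreover have "card (insert A M) = card M + 1" using finMM AnM by simp
    ultimately show False using cM by simp
  qed
  define f where "f A = (SOME y. y \<in> A \<inter> \<Union>M)" for A
  have fin: "f A \<in> A \<inter> \<Union>M" if "A \<in> star F x" for A
    unfolding f_def using hit[OF that] by (metis all_not_in_conv someI_ex)
  have inj: "inj_on f (star F x)"
  proof (rule inj_onI)
    fix A B assume A: "A \<in> star F x" and B: "B \<in> star F x" and eq: "f A = f B"
    show "A = B"
    proof (rule ccontr)
      assume ne: "A \<noteq> B"
      have AF: "A \<in> F" "x \<in> A" "B \<in> F" "x \<in> B" using A B unfolding star_def by auto
      have y: "f A \<in> A \<inter> B" "f A \<noteq> x" using fin[OF A] fin[OF B] eq xM by auto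
      have finA: "finite (A \<inter> B)" using AF(1) assms(2) unfolding uniform_def by auto
      have "{x, f A} \<subseteq> A \<inter> B" using y AF by auto
      hence "card {x, f A} \<le> card (A \<inter> B)" using finA by (rule card_mono[rotated])
      moreover have "card {x, f A} = 2" using y by auto
      moreover have "card (A \<inter> B) \<le> 1" using assms(3) AF ne unfolding linear_family_def by auto
      ultimately show False by simp
    qed
  qed
  have finU: "finite (\<Union>M)" using finMM MF assms(2) unfolding uniform_def by auto
  have "card (star F x) \<le> card (\<Union>M)"
    using card_inj_on_le[OF inj _ finU] fin by blast
  also have "\<dots> \<le> sum card M" by (rule card_Union_le_sum_card)
  also have "\<dots> = k * card M"
    using MF assms(2) unfolding uniform_def by (simp add: subset_iff)
  finally show False using cM assms(5) by simp
qed

end
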